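(* Let the standing assumptions (listed in the context) hold. Let $(x_k)$ have a cluster point $x^*$ such that $\mathcal{J}|_{\mathcal{N}}$ is $\kappa$-strongly convex, where $\mathcal{N}\subset\Omega$ is a convex neighborhood of $x^*$. Then 1) $\mathcal{J}(x^* )+\kappa\|x-x^*\|^2\le\mathcal{J}(x)$ for all $x\in\mathcal{N}$; 2) the iterates $(x_k)$ converge r-linearly to $x^*$; 3) the gradients $(\nabla\mathcal{J}(x_k))$ converge r-linearly to zero; 4) the function values $(\mathcal{J}(x_k))$ converge q-linearly to $\mathcal{J}(x^* )$; specifically, if $\bar k$ is such that $x_k\in\mathcal{N}$ for all $k\ge\bar k$, then $\mathcal{J}(x_{k+1})-\mathcal{J}(x^* )\le\left(1-\frac{2\sigma\alpha_k\kappa}{\|B_k\|}\right)[\mathcal{J}(x_k)-\mathcal{J}(x^* )]$ for all $k\ge\bar k$, and the supremum of the term in round brackets is strictly smaller than 1.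
   Context: Let $\mathcal{X}$ be a Hilbert space and $\mathcal{J}:\mathcal{X}\to\mathbb{R}$. Algorithm SLBFGS (structured inverse L-BFGS): inputs $x_0\in\mathcal{X}$, $\epsilon\geq0$, $\ell\in\mathbb{N}_0$, $c_0\geq 0$, $C_0\in[c_0,\infty]$, $c_s,c_1,c_2>0$; let $\tau_0>0$. For $k=0,1,2,\ldots$: let $m=\max\{0,k-\ell\}$; choose a symmetric positive semi-definite bounded linear operator $S_k$; set $B_k^{(0)}=\tau_k I+S_k$; let $B_k$ be obtained from $B_k^{(0)}$ and the currently stored pairs $(s_j,y_j)$, $m\le j\le k-1$, by successive L-BFGS updates $B\mapsto B+\frac{yy^T}{y^Ts}-\frac{Bss^TB}{s^TBs}$; set $d_k=-B_k^{-1}\nabla\mathcal{J}(x_k)$; compute a step length $\alpha_k>0$ by a line search; set $s_k=\alpha_kd_k$, $x_{k+1}=x_k+s_k$, $y_k=\nabla\mathcal{J}(x_{k+1})-\nabla\mathcal{J}(x_k)$; store $(s_k,y_k)$ only if $y_k^Ts_k>c_s\|s_k\|^2$; if $k\ge\ell$ remove $(s_m,y_m)$ from storage; stop with output $x_{k+1}$ if $\|\nabla\mathcal{J}(x_{k+1})\|\le\epsilon$; set $z_k=y_k-S_{k+1}s_k$, $\omega^l_{k+1}=\min\{c_0,c_1\|\nabla\mathcal{J}(x_{k+1})\|^{c_2}\}$, $\omega^u_{k+1}=\max\{C_0,(c_1\|\nabla\mathcal{J}(x_{k+1})\|^{c_2})^{-1}\}$; with $P(t)=\min\{\max\{t,\omega^l_{k+1}\},\omega^u_{k+1}\}$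 and $\rho=z_k^Ts_k$ let $\tau^s=P(\rho/\|s_k\|^2)$, $\tau^g=P(\|z_k\|/\|s_k\|)$, $\tau^z=P(\|z_k\|^2/\rho)$; if $\rho>0$ choose $\tau_{k+1}\in[\tau^s,\tau^z]$, else choose $\tau_{k+1}\in[\tau^s,\tau^g]$. Line searches: Armijo with backtracking means, for fixed $\beta,\sigma\in(0,1)$, $\alpha_k$ is the largest number in $\{1,\beta,\beta^2,\ldots\}$ with $\mathcal{J}(x_{k+1})\le\mathcal{J}(x_k)+\alpha_k\sigma\nabla\mathcal{J}(x_k)^Td_k$; the Wolfe–Powell conditions are this Armijo inequality together with $\nabla\mathcal{J}(x_{k+1})^Td_k\ge\eta\nabla\mathcal{J}(x_k)^Td_k$ for fixed $\eta\in(\sigma,1)$. Let $\Omega=\{x:\mathcal{J}(x)\le\mathcal{J}(x_0)\}$. Standing assumptions: 1) $\mathcal{J}$ is continuously differentiable and bounded below; 2) $\nabla\mathcal{J}$ is Lipschitz continuous on $\Omega$ with constant $L>0$; 3) $(\|S_k\|)$ is bounded; 4) the step sizes consistently satisfy the Armijo condition computed by backtracking, or consistently satisfy the Wolfe–Powell conditions (no uniform continuity assumption on a neighborhood of $\Omega$ is required); 5) $c_0=0$ is only chosen if then $\sup_k\|(B_k^{(0)})^{-1}\|<\infty$; 6) $C_0=\infty$ is only chosen if either the interval $[\tau^s,\tau^z]$ is replaced by $[\tau^s,\tau^g]$, or $\mathcal{J}$ is twice continuously differentiable, $\int_0^1\nabla^2\mathcal{J}(x_k+ts_k)\,dt-S_{k+1}$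 is symmetric positive semi-definite for all $k$ with bounded norms; 7) the algorithm is run with $\epsilon=0$ and generates an infinite sequence $(x_k)$; 8) $(\|B_k\|)$ and $(\|B_k^{-1}\|)$ are bounded. *)

theory Defs
  imports "HOL-Analysis.Analysis"
begin

definition sym_psd :: "('a::real_inner \<Rightarrow>\<^sub>L 'a) \<Rightarrow> bool" where
  "sym_psd A \<longleftrightarrow> (\<forall>u v. A u \<bullet> v = u \<bullet> A v) \<and> (\<forall>u. 0 \<le> A u \<bullet> u)"

definition lbfgs_update :: "('a::real_inner \<Rightarrow>\<^sub>L 'a) \<Rightarrow> 'a \<Rightarrow> 'a \<Rightarrow> ('a \<Rightarrow>\<^sub>L 'a)" where
  "lbfgs_update B s y = B + Blinfun (\<lambda>v. ((y \<bullet> v) / (y \<bullet> s)) *\<^sub>R y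
                                      - ((s \<bullet> B v) / (s \<bullet> B s)) *\<^sub>R B s)"

definition step_s :: "(nat \<Rightarrow> 'a::real_vector) \<Rightarrow> nat \<Rightarrow> 'a" where
  "step_s x k = x (Suc k) - x k"

definition step_y :: "('a \<Rightarrow> 'b::real_vector) \<Rightarrow> (nat \<Rightarrow> 'a) \<Rightarrow> nat \<Rightarrow> 'b" where
  "step_y G x k = G (x (Suc k)) - G (x k)"

definition B0 :: "(nat \<Rightarrow> ('a::real_normed_vector \<Rightarrow>\<^sub>L 'a)) \<Rightarrow> (nat \<Rightarrow> real) \<Rightarrow> nat \<Rightarrow> ('a \<Rightarrow>\<^sub>L 'a)" where
  "B0 S \<tau> k = \<tau> k *\<^sub>R id_blinfun + S k"

text \<open>Indices j, m \<le> j \<le> k-1 (m = max 0 (k - l)), whose pairs are stored at iteration k: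
  exactly those satisfying the curvature test  y_j^T s_j > c_s ||s_j||^2.\<close>
definition stored :: "('a::real_inner \<Rightarrow> 'a) \<Rightarrow> (nat \<Rightarrow> 'a) \<Rightarrow> nat \<Rightarrow> real \<Rightarrow> nat \<Rightarrow> nat list" where
  "stored G x l cs k =
     filter (\<lambda>j. step_y G x j \<bullet> step_s x j > cs * (norm (step_s x j))\<^sup>2) [k - l..<k]"

definition Bop :: "('a::real_inner \<Rightarrow> 'a) \<Rightarrow> (nat \<Rightarrow> 'a) \<Rightarrow> nat \<Rightarrow> real
     \<Rightarrow> (nat \<Rightarrow> ('a \<Rightarrow>\<^sub>L 'a)) \<Rightarrow> (nat \<Rightarrow> real) \<Rightarrow> nat \<Rightarrow> ('a \<Rightarrow>\<^sub>L 'a)" where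
  "Bop G x l cs S \<tau> k =
     foldl (\<lambda>B j. lbfgs_update B (step_s x j) (step_y G x j)) (B0 S \<tau> k) (stored G x l cs k)"

definition Pproj :: "real \<Rightarrow> ereal \<Rightarrow> real \<Rightarrow> real" where
  "Pproj wl wu t = real_of_ereal (min (ereal (max t wl)) wu)"

definition tau_rule ::
  "('a::real_inner \<Rightarrow> 'a) \<Rightarrow> (nat \<Rightarrow> 'a) \<Rightarrow> (nat \<Rightarrow> ('a \<Rightarrow>\<^sub>L 'a)) \<Rightarrow> real \<Rightarrow> ereal
    \<Rightarrow> real \<Rightarrow> real \<Rightarrow> bool \<Rightarrow> nat \<Rightarrow> real \<Rightarrow> bool" where
  "tau_rule G x S c0 C0 c1 c2 use_g k t \<longleftrightarrow>
     (let s = step_s x k; z = step_y G x k - S (Suc k) s;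
          gn = norm (G (x (Suc k)));
          wl = min c0 (c1 * gn powr c2);
          wu = max C0 (ereal (inverse (c1 * gn powr c2)));
          \<rho> = z \<bullet> s;
          ts = Pproj wl wu (\<rho> / (norm s)\<^sup>2);
          tg = Pproj wl wu (norm z / norm s);
          tz = Pproj wl wu ((norm z)\<^sup>2 / \<rho>)
      in if \<rho> > 0 \<and> \<not> use_g then ts \<le> t \<and> t \<le> tz else ts \<le> t \<and> t \<le> tg)"

definition armijo :: "('a::real_inner \<Rightarrow> real) \<Rightarrow> ('a \<Rightarrow> 'a) \<Rightarrow> (nat \<Rightarrow> 'a) \<Rightarrow> (nat \<Rightarrow> 'a)
    \<Rightarrow> real \<Rightarrow> nat \<Rightarrow> real \<Rightarrow> bool" where
  "armijo J G x d \<sigma> k a \<longleftrightarrow> J (x k + a *\<^sub>R d k) \<le> J (x k) + a * \<sigma> * (G (x k) \<bullet> d k)"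

definition armijo_backtracking where
  "armijo_backtracking J G x d \<sigma> \<beta> \<alpha> k \<longleftrightarrow>
     (\<exists>i::nat. \<alpha> k = \<beta> ^ i \<and> armijo J G x d \<sigma> k (\<beta> ^ i)
               \<and> (\<forall>j<i. \<not> armijo J G x d \<sigma> k (\<beta> ^ j)))"

definition wolfe_powell where
  "wolfe_powell J G x d \<sigma> \<eta> \<alpha> k \<longleftrightarrow>
     armijo J G x d \<sigma> k (\<alpha> k) \<and> G (x k + \<alpha> k *\<^sub>R d k) \<bullet> d k \<ge> \<eta> * (G (x k) \<bullet> d k)"

text \<open>An infinite run of SLBFGS with epsilon = 0 (never stopping).  Binv k is the inverse
  of B_k, d_k = - B_k^{-1} grad J(x_k), x_{k+1} = x_k + alpha_k d_k.\<close>
definition slbfgs_run ::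
  "('a::{real_inner,complete_space} \<Rightarrow> real) \<Rightarrow> ('a \<Rightarrow> 'a) \<Rightarrow> 'a \<Rightarrow> nat \<Rightarrow> real \<Rightarrow> ereal
    \<Rightarrow> real \<Rightarrow> real \<Rightarrow> real \<Rightarrow> bool \<Rightarrow> (nat \<Rightarrow> ('a \<Rightarrow>\<^sub>L 'a)) \<Rightarrow> (nat \<Rightarrow> real)
    \<Rightarrow> (nat \<Rightarrow> ('a \<Rightarrow>\<^sub>L 'a)) \<Rightarrow> (nat \<Rightarrow> real) \<Rightarrow> (nat \<Rightarrow> 'a) \<Rightarrow> bool" where
  "slbfgs_run J G x0 l c0 C0 cs c1 c2 use_g S \<tau> Binv \<alpha> x \<longleftrightarrow>
     0 \<le> c0 \<and> ereal c0 \<le> C0 \<and> cs > 0 \<and> c1 > 0 \<and> c2 > 0 \<and>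
     x 0 = x0 \<and> \<tau> 0 > 0 \<and>
     (\<forall>k. sym_psd (S k)) \<and>
     (\<forall>k v. Binv k (Bop G x l cs S \<tau> k v) = v \<and> Bop G x l cs S \<tau> k (Binv k v) = v) \<and>
     (\<forall>k. \<alpha> k > 0) \<and>
     (\<forall>k. x (Suc k) = x k + \<alpha> k *\<^sub>R (- Binv k (G (x k)))) \<and>
     (\<forall>k. norm (G (x (Suc k))) > 0) \<and>
     (\<forall>k. tau_rule G x S c0 C0 c1 c2 use_g k (\<tau> (Suc k)))"

text \<open>kappa-strong convexity (convention matching conclusion 1).\<close>
definition strongly_convex_on :: "'a::real_normed_vector set \<Rightarrow> ('a \<Rightarrow> real) \<Rightarrow> real \<Rightarrow> bool" where
  "strongly_convex_on N J \<kappa> \<longleftrightarrow> convex N \<and>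
     (\<forall>x\<in>N. \<forall>y\<in>N. \<forall>t\<in>{0..1}.
        J (t *\<^sub>R x + (1 - t) *\<^sub>R y) \<le> t * J x + (1 - t) * J y - \<kappa> * t * (1 - t) * (norm (x - y))\<^sup>2)"

definition r_linear_conv :: "(nat \<Rightarrow> 'a::real_normed_vector) \<Rightarrow> 'a \<Rightarrow> bool" where
  "r_linear_conv a L \<longleftrightarrow> (\<exists>C q. 0 < q \<and> q < 1 \<and> (\<forall>k. norm (a k - L) \<le> C * q ^ k))"

definition q_linear_conv :: "(nat \<Rightarrow> real) \<Rightarrow> real \<Rightarrow> bool" where
  "q_linear_conv a L \<longleftrightarrow> (\<exists>q K. 0 \<le> q \<and> q < 1 \<and> (\<forall>k\<ge>K. \<bar>a (Suc k) - L\<bar> \<le> q * \<bar>a k - L\<bar>))"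

end

theory Submission imports Defs begin

lemma psd_cs:
  fixes A :: "'a::real_inner \<Rightarrow>\<^sub>L 'a"
  assumes "sym_psd A"
  shows "(A u \<bullet> v)\<^sup>2 \<le> (A u \<bullet> u) * (A v \<bullet> v)"
proof -
  have sym: "\<And>u v. A u \<bullet> v = u \<bullet> A v" and pos: "\<And>u. 0 \<le> A u \<bullet> u"
    using assms unfolding sym_psd_def by auto
  define a where "a = A v \<bullet> v"
  define b where "b = A u \<bullet> v"
  define c where "c = A u \<bullet> u"
  have q: "0 \<le> c + 2 * t * b + t\<^sup>2 * a" for t
  proof -
    have "0 \<le> A (u + t *\<^sub>R v) \<bullet> (u + t *\<^sub>R v)" by (rule pos)
    also have "\<dots> = c + t * (A u \<bullet> v) + t * (A v \<bullet> u) + t\<^sup>2 * a"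
      by (simp add: blinfun.add_right blinfun.scaleR_right inner_add_left inner_add_right
          a_def c_def power2_eq_square algebra_simps)
    also have "A v \<bullet> u = b" unfolding b_def using sym[of v u] sym[of u v] by (simp add: inner_commute)
    finally show ?thesis by (simp add: b_def)
  qed
  have "a \<ge> 0" unfolding a_def by (rule pos)
  show ?thesis
  proof (cases "a = 0")
    case True
    show ?thesis
    proof (cases "b = 0")
      case True thus ?thesis using \<open>a = 0\<close> by (simp add: b_def a_def c_def)
    next
      case False
      have "0 \<le> c + 2 * (-(c+1)/(2*b)) * b + (-(c+1)/(2*b))\<^sup>2 * a" by (rule q)
      hence False using False \<open>a = 0\<close> by (simp add: field_simps)
      thus ?thesis ..
    qed
  next
    case False
    hence "a > 0" using \<open>a \<ge> 0\<close> by simp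
    have "0 \<le> c + 2 * (-b/a) * b + (-b/a)\<^sup>2 * a" by (rule q)
    hence "0 \<le> c * a - b\<^sup>2" using \<open>a > 0\<close>
      by (simp add: field_simps power2_eq_square)
    thus ?thesis by (simp add: a_def b_def c_def)
  qed
qed

lemma psd_normsq:
  fixes A :: "'a::real_inner \<Rightarrow>\<^sub>L 'a"
  assumes "sym_psd A"
  shows "(norm (A u))\<^sup>2 \<le> norm A * (A u \<bullet> u)"
proof -
  have pos: "0 \<le> A u \<bullet> u" using assms unfolding sym_psd_def by auto
  have cs: "(A u \<bullet> A u)\<^sup>2 \<le> (A u \<bullet> u) * (A (A u) \<bullet> A u)"
    by (rule psd_cs[OF assms])
  have "A (A u) \<bullet> A u \<le> norm (A (A u)) * norm (A u)" by (rule norm_cauchy_schwarz)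
  also have "\<dots> \<le> norm A * norm (A u) * norm (A u)"
    by (intro mult_right_mono norm_blinfun) auto
  finally have h: "A (A u) \<bullet> A u \<le> norm A * (norm (A u))\<^sup>2" by (simp add: power2_eq_square mult.assoc)
  have "(A u \<bullet> A u)\<^sup>2 \<le> (A u \<bullet> u) * (norm A * (norm (A u))\<^sup>2)"
    using cs mult_left_mono[OF h pos] by (rule order_trans)
  moreover have "A u \<bullet> A u = (norm (A u))\<^sup>2" by (simp add: power2_norm_eq_inner)
  ultimately have "(norm (A u))\<^sup>2 * (norm (A u))\<^sup>2 \<le> (norm A * (A u \<bullet> u)) * (norm (A u))\<^sup>2"
    by (simp add: power2_eq_square algebra_simps)
  moreover have "norm A * (A u \<bullet> u) \<ge> 0" using pos by simp
  ultimately show ?thesis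
    using mult_right_le_imp_le[of "(norm (A u))\<^sup>2" "(norm (A u))\<^sup>2" "norm A * (A u \<bullet> u)"]
    by (cases "norm (A u) = 0") auto
qed

lemma upd_apply:
  fixes B :: "'a::real_inner \<Rightarrow>\<^sub>L 'a"
  shows "lbfgs_update B s y v = B v + ((y \<bullet> v) / (y \<bullet> s)) *\<^sub>R y - ((s \<bullet> B v) / (s \<bullet> B s)) *\<^sub>R B s"
proof -
  have "bounded_linear (\<lambda>v. ((y \<bullet> v) / (y \<bullet> s)) *\<^sub>R y - ((s \<bullet> B v) / (s \<bullet> B s)) *\<^sub>R B s)"
  proof -
    have 1: "bounded_linear (\<lambda>v. (y \<bullet> v) / (y \<bullet> s))"
      using bounded_linear_compose[OF bounded_linear_divide[of "y \<bullet> s"] bounded_linear_inner_right[of y]]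
      by (simp add: o_def)
    have 2: "bounded_linear (\<lambda>v. (s \<bullet> B v) / (s \<bullet> B s))"
      using bounded_linear_compose[OF bounded_linear_divide[of "s \<bullet> B s"]
          bounded_linear_compose[OF bounded_linear_inner_right[of s] blinfun.bounded_linear_right[of B]]]
      by (simp add: o_def)
    show ?thesis
      using bounded_linear_sub[OF bounded_linear_compose[OF bounded_linear_scaleR_left[of y] 1]
          bounded_linear_compose[OF bounded_linear_scaleR_left[of "B s"] 2]] by (simp add: o_def)
  qed
  thus ?thesis unfolding lbfgs_update_def
    by (simp add: bounded_linear_Blinfun_apply blinfun.add_left)
qed

lemma upd_psd:
  fixes B :: "'a::real_inner \<Rightarrow>\<^sub>L 'a"
  assumes "sym_psd B" "y \<bullet> s > 0"
  shows "sym_psd (lbfgs_update B s y)"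
proof -
  have sym: "\<And>u v. B u \<bullet> v = u \<bullet> B v" and pos: "\<And>u. 0 \<le> B u \<bullet> u"
    using assms(1) unfolding sym_psd_def by auto
  have "lbfgs_update B s y u \<bullet> v = u \<bullet> lbfgs_update B s y v" for u v
  proof -
    have e1: "s \<bullet> B u = u \<bullet> B s" "s \<bullet> B v = v \<bullet> B s" using sym by (auto simp: inner_commute)
    have e2: "B u \<bullet> v = u \<bullet> B v" by (rule sym)
    have e3: "B s \<bullet> u = u \<bullet> B s" "B s \<bullet> v = v \<bullet> B s" "y \<bullet> u = u \<bullet> y" "y \<bullet> v = v \<bullet> y"
      by (auto simp: inner_commute)
    show ?thesis unfolding upd_apply inner_diff_left inner_diff_right inner_add_left inner_add_right
        inner_scaleR_left inner_scaleR_right e1 e2 e3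
      by (simp add: algebra_simps)
  qed
  moreover have "0 \<le> lbfgs_update B s y v \<bullet> v" for v
  proof -
    have e: "lbfgs_update B s y v \<bullet> v = B v \<bullet> v + (y \<bullet> v)\<^sup>2 / (y \<bullet> s) - (s \<bullet> B v)\<^sup>2 / (s \<bullet> B s)"
      unfolding upd_apply using sym[of s v]
      by (simp add: inner_diff_left inner_add_left inner_diff_right inner_add_right power2_eq_square inner_commute)
    have a: "0 \<le> (y \<bullet> v)\<^sup>2 / (y \<bullet> s)" using assms(2) by simp
    have b: "(s \<bullet> B v)\<^sup>2 / (s \<bullet> B s) \<le> B v \<bullet> v"
    proof (cases "s \<bullet> B s = 0")
      case True thus ?thesis using pos by simp
    next
      case False
      have "s \<bullet> B s \<ge> 0" using pos[of s] sym[of s s] by simp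
      hence gt: "s \<bullet> B s > 0" using False by simp
      have "(B s \<bullet> v)\<^sup>2 \<le> (B s \<bullet> s) * (B v \<bullet> v)" by (rule psd_cs[OF assms(1)])
      moreover have "s \<bullet> B v = B s \<bullet> v" "B s \<bullet> s = s \<bullet> B s" using sym by (auto simp: inner_commute)
      ultimately have "(s \<bullet> B v)\<^sup>2 \<le> (s \<bullet> B s) * (B v \<bullet> v)" by simp
      thus ?thesis using gt by (simp add: divide_le_eq mult.commute)
    qed
    show ?thesis using e a b by linarith
  qed
  ultimately show ?thesis unfolding sym_psd_def by auto
qed

lemma foldl_psd:
  assumes "sym_psd B" "\<forall>j\<in>set js. step_y G x j \<bullet> step_s x j > 0"
  shows "sym_psd (foldl (\<lambda>B j. lbfgs_update B (step_s x j) (step_y G x j)) B js)"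
  using assms
proof (induction js arbitrary: B)
  case Nil thus ?case by simp
next
  case (Cons j js)
  thus ?case by (simp add: Cons.IH upd_psd)
qed

lemma B0_psd:
  assumes "sym_psd (S k)" "\<tau> k \<ge> 0"
  shows "sym_psd (B0 S \<tau> k)"
  using assms unfolding sym_psd_def B0_def
  by (auto simp: blinfun.add_left blinfun.scaleR_left inner_add_left inner_add_right inner_commute)

lemma Bop_psd:
  assumes "sym_psd (S k)" "\<tau> k \<ge> 0" "cs > 0"
  shows "sym_psd (Bop G x l cs S \<tau> k)"
  unfolding Bop_def
proof (rule foldl_psd)
  show "sym_psd (B0 S \<tau> k)" by (rule B0_psd[of S k \<tau>]) (use assms in auto)
  show "\<forall>j\<in>set (stored G x l cs k). step_y G x j \<bullet> step_s x j > 0"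
  proof
    fix j assume "j \<in> set (stored G x l cs k)"
    hence "step_y G x j \<bullet> step_s x j > cs * (norm (step_s x j))\<^sup>2" unfolding stored_def by auto
    moreover have "cs * (norm (step_s x j))\<^sup>2 \<ge> 0" using assms(3) by simp
    ultimately show "step_y G x j \<bullet> step_s x j > 0" by linarith
  qed
qed

lemma Pproj_nonneg:
  assumes "0 \<le> wl" "0 \<le> wu"
  shows "0 \<le> Pproj wl wu t"
  unfolding Pproj_def using assms
  by (cases wu) (auto simp: min_def max_def)


lemma line_deriv:
  fixes J :: "'a::real_inner \<Rightarrow> real"
  assumes grad: "\<And>v. (J has_derivative (\<lambda>h. G v \<bullet> h)) (at v)"
  shows "((\<lambda>t. J (x + t *\<^sub>R d)) has_real_derivative (G (x + t *\<^sub>R d) \<bullet> d)) (at t)"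
proof -
  have "((\<lambda>t. x + t *\<^sub>R d) has_derivative (\<lambda>h. h *\<^sub>R d)) (at t)"
    by (auto intro!: derivative_eq_intros)
  from diff_chain_at[OF this grad[of "x + t *\<^sub>R d"]]
  have "((J \<circ> (\<lambda>t. x + t *\<^sub>R d)) has_derivative ((\<lambda>h. G (x + t *\<^sub>R d) \<bullet> h) \<circ> (\<lambda>h. h *\<^sub>R d))) (at t)" .
  moreover have "((\<lambda>h. G (x + t *\<^sub>R d) \<bullet> h) \<circ> (\<lambda>h. h *\<^sub>R d)) = (*) (G (x + t *\<^sub>R d) \<bullet> d)"
    by (auto simp: o_def fun_eq_iff)
  ultimately show ?thesis unfolding has_field_derivative_def by (simp add: o_def)
qed

lemma sc_grad:
  fixes J :: "'a::real_inner \<Rightarrow> real"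
  assumes sc: "strongly_convex_on N J \<kappa>" and uN: "u \<in> N" and vN: "v \<in> N"
    and du: "(J has_derivative (\<lambda>h. g \<bullet> h)) (at u)"
  shows "J u + g \<bullet> (v - u) + \<kappa> * (norm (v - u))\<^sup>2 \<le> J v"
proof -
  define \<psi> where "\<psi> t = J (u + t *\<^sub>R (v - u))" for t
  have "((\<lambda>t. u + t *\<^sub>R (v - u)) has_derivative (\<lambda>h. h *\<^sub>R (v - u))) (at 0)"
    by (auto intro!: derivative_eq_intros)
  from diff_chain_at[OF this] du
  have "((J \<circ> (\<lambda>t. u + t *\<^sub>R (v - u))) has_derivative ((\<lambda>h. g \<bullet> h) \<circ> (\<lambda>h. h *\<^sub>R (v - u)))) (at 0)"
    by simp
  moreover have "((\<lambda>h. g \<bullet> h) \<circ> (\<lambda>h. h *\<^sub>R (v - u))) = (*) (g \<bullet> (v - u))"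
    by (auto simp: o_def fun_eq_iff)
  ultimately have D: "(\<psi> has_real_derivative (g \<bullet> (v - u))) (at 0)"
    unfolding has_field_derivative_def \<psi>_def by (simp add: o_def)
  hence "(\<psi> has_real_derivative (g \<bullet> (v - u))) (at 0 within {0<..})"
    by (rule has_field_derivative_at_within)
  hence lim: "((\<lambda>t. (\<psi> t - \<psi> 0) / t) \<longlongrightarrow> g \<bullet> (v - u)) (at_right 0)"
    unfolding has_field_derivative_iff by simp
  have lim2: "((\<lambda>t. J v - J u - \<kappa> * (1 - t) * (norm (v - u))\<^sup>2) \<longlongrightarrow> J v - J u - \<kappa> * (1 - 0) * (norm (v - u))\<^sup>2) (at_right 0)"
    by (intro tendsto_intros)
  have ev: "eventually (\<lambda>t. (\<psi> t - \<psi> 0) / t \<le> J v - J u - \<kappa> * (1 - t) * (norm (v - u))\<^sup>2) (at_right 0)"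
    unfolding eventually_at_right_field
  proof (intro exI[of _ 1] conjI allI impI)
    fix t :: real assume t: "0 < t" "t < 1"
    have "convex N" and def: "\<forall>x\<in>N. \<forall>y\<in>N. \<forall>t\<in>{0..1}.
        J (t *\<^sub>R x + (1 - t) *\<^sub>R y) \<le> t * J x + (1 - t) * J y - \<kappa> * t * (1 - t) * (norm (x - y))\<^sup>2"
      using sc unfolding strongly_convex_on_def by auto
    have "J (t *\<^sub>R v + (1 - t) *\<^sub>R u) \<le> t * J v + (1 - t) * J u - \<kappa> * t * (1 - t) * (norm (v - u))\<^sup>2"
      using def uN vN t by auto
    moreover have "t *\<^sub>R v + (1 - t) *\<^sub>R u = u + t *\<^sub>R (v - u)" by (simp add: algebra_simps)
    ultimately have "\<psi> t - \<psi> 0 \<le> t * (J v - J u - \<kappa> * (1 - t) * (norm (v - u))\<^sup>2)"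
      unfolding \<psi>_def by (simp add: algebra_simps)
    thus "(\<psi> t - \<psi> 0) / t \<le> J v - J u - \<kappa> * (1 - t) * (norm (v - u))\<^sup>2"
      using t by (simp add: divide_le_eq mult.commute)
  qed simp
  have "g \<bullet> (v - u) \<le> J v - J u - \<kappa> * (1 - 0) * (norm (v - u))\<^sup>2"
    by (rule tendsto_le[OF trivial_limit_at_right_real lim2 lim ev])
  thus ?thesis by simp
qed

lemma armijo_fail_bound:
  fixes J :: "'a::real_inner \<Rightarrow> real"
  assumes grad: "\<And>v. (J has_derivative (\<lambda>h. G v \<bullet> h)) (at v)"
    and lipL: "\<forall>u\<in>{v. J v \<le> c}. \<forall>v\<in>{v. J v \<le> c}. norm (G u - G v) \<le> L * norm (u - v)"
    and L: "L > 0"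
    and Jx: "J x \<le> c" and neg: "G x \<bullet> d < 0" and \<sigma>: "0 < \<sigma>" "\<sigma> < 1" and t0: "t0 > 0"
    and fail: "J (x + t0 *\<^sub>R d) > J x + t0 * \<sigma> * (G x \<bullet> d)"
  shows "(1 - \<sigma>) * (- (G x \<bullet> d)) \<le> L * t0 * (norm d)\<^sup>2"
proof -
  define \<phi> where "\<phi> t = J (x + t *\<^sub>R d) - J x - t * (\<sigma> * (G x \<bullet> d))" for t
  have D\<phi>: "(\<phi> has_real_derivative (G (x + t *\<^sub>R d) \<bullet> d - \<sigma> * (G x \<bullet> d))) (at t)" for t
  proof -
    have "((\<lambda>t. J (x + t *\<^sub>R d) - J x - t * (\<sigma> * (G x \<bullet> d))) has_real_derivative
           (G (x + t *\<^sub>R d) \<bullet> d - 0 - 1 * (\<sigma> * (G x \<bullet> d)))) (at t)"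
      by (rule DERIV_diff[OF DERIV_diff[OF line_deriv[OF grad] DERIV_const] DERIV_cmult_right[OF DERIV_ident]])
    thus ?thesis unfolding \<phi>_def by simp
  qed
  have \<phi>0: "\<phi> 0 = 0" unfolding \<phi>_def by simp
  have "(\<phi> has_real_derivative (G x \<bullet> d - \<sigma> * (G x \<bullet> d))) (at 0)"
    using D\<phi>[of 0] by simp
  moreover have "G x \<bullet> d - \<sigma> * (G x \<bullet> d) < 0"
  proof -
    have "G x \<bullet> d - \<sigma> * (G x \<bullet> d) = (1 - \<sigma>) * (G x \<bullet> d)" by (simp add: algebra_simps)
    moreover have "(1 - \<sigma>) * (G x \<bullet> d) < 0" using neg \<sigma> by (intro mult_pos_neg) auto
    ultimately show ?thesis by simp
  qed
  ultimately obtain \<delta> where \<delta>: "\<delta> > 0" "\<forall>h>0. h < \<delta> \<longrightarrow> \<phi> 0 > \<phi> (0 + h)"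
    using DERIV_neg_dec_right by blast
  have cont: "continuous_on UNIV \<phi>"
    using D\<phi> DERIV_isCont continuous_at_imp_continuous_on by blast
  define \<delta>2 where "\<delta>2 = min (\<delta>/2) t0"
  have \<delta>2: "0 < \<delta>2" "\<delta>2 < \<delta>" "\<delta>2 \<le> t0" using \<delta> t0 unfolding \<delta>2_def by auto
  define E where "E = {\<delta>2..t0} \<inter> {t. 0 \<le> \<phi> t}"
  have "closed {t. 0 \<le> \<phi> t}"
    using closed_Collect_le[OF continuous_on_const cont] by simp
  hence clE: "closed E" unfolding E_def by (intro closed_Int) auto
  have "\<phi> t0 > 0" using fail unfolding \<phi>_def by simp
  hence t0E: "t0 \<in> E" unfolding E_def using \<delta>2 by auto
  have bddE: "bdd_below E" unfolding E_def by (rule bdd_belowI[of _ \<delta>2]) auto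
  define t1 where "t1 = Inf E"
  have t1E: "t1 \<in> E" unfolding t1_def using closed_contains_Inf[OF _ bddE clE] t0E by auto
  hence t1: "\<delta>2 \<le> t1" "t1 \<le> t0" "0 \<le> \<phi> t1" unfolding E_def by auto
  have below: "\<phi> s \<le> 0" if "0 \<le> s" "s < t1" for s
  proof (cases "s < \<delta>2")
    case True
    show ?thesis
    proof (cases "s = 0")
      case True thus ?thesis using \<phi>0 by simp
    next
      case False
      hence "s > 0" using that by simp
      thus ?thesis using \<delta>(2) \<delta>2 True \<phi>0 by force
    qed
  next
    case False
    show ?thesis
    proof (rule ccontr)
      assume "\<not> \<phi> s \<le> 0"
      hence "s \<in> E" unfolding E_def using False that t1 by auto
      hence "t1 \<le> s" unfolding t1_def using bddE by (rule cInf_lower)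
      thus False using that by simp
    qed
  qed
  have "0 < t1" using t1 \<delta>2 by simp
  obtain z where z: "0 < z" "z < t1"
    "J (x + t1 *\<^sub>R d) - J (x + 0 *\<^sub>R d) = (t1 - 0) * (G (x + z *\<^sub>R d) \<bullet> d)"
    using MVT2[OF \<open>0 < t1\<close>, of "\<lambda>t. J (x + t *\<^sub>R d)" "\<lambda>t. G (x + t *\<^sub>R d) \<bullet> d"]
      line_deriv[OF grad] by blast
  have "t1 * (\<sigma> * (G x \<bullet> d)) \<le> t1 * (G (x + z *\<^sub>R d) \<bullet> d)"
    using t1(3) z(3) unfolding \<phi>_def by simp
  hence ge: "\<sigma> * (G x \<bullet> d) \<le> G (x + z *\<^sub>R d) \<bullet> d"
    using \<open>0 < t1\<close> by (simp add: mult_le_cancel_left)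
  have "\<phi> z \<le> 0" using below z by simp
  moreover have "z * (\<sigma> * (G x \<bullet> d)) \<le> 0"
    using z \<sigma> neg by (simp add: mult_nonneg_nonpos mult_pos_neg)
  ultimately have "J (x + z *\<^sub>R d) \<le> c" using Jx unfolding \<phi>_def by simp
  hence "norm (G (x + z *\<^sub>R d) - G x) \<le> L * norm ((x + z *\<^sub>R d) - x)"
    using lipL Jx by blast
  also have "\<dots> = L * z * norm d" using z by simp
  finally have lipz: "norm (G (x + z *\<^sub>R d) - G x) \<le> L * z * norm d" .
  have "(G (x + z *\<^sub>R d) - G x) \<bullet> d \<le> norm (G (x + z *\<^sub>R d) - G x) * norm d"
    by (rule norm_cauchy_schwarz)
  also have "\<dots> \<le> L * z * norm d * norm d" using lipz by (simp add: mult_right_mono)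
  also have "\<dots> \<le> L * t0 * norm d * norm d"
    using z t1 L by (intro mult_right_mono) auto
  finally have "(G (x + z *\<^sub>R d) - G x) \<bullet> d \<le> L * t0 * (norm d)\<^sup>2"
    by (simp add: power2_eq_square mult.assoc)
  moreover have "(G (x + z *\<^sub>R d) - G x) \<bullet> d \<ge> (1 - \<sigma>) * (- (G x \<bullet> d))"
    using ge by (simp add: inner_diff_left algebra_simps)
  ultimately show ?thesis by linarith
qed

lemma r_lin_tail:
  assumes "0 < \<rho>" "\<rho> < 1" "\<forall>k\<ge>k0. norm (a k - L) \<le> C * \<rho> ^ k"
  shows "r_linear_conv a L"
proof -
  define M where "M = Max ((\<lambda>k. norm (a k - L) / \<rho> ^ k) ` {..k0})"
  define C' where "C' = max C M"
  have "norm (a k - L) \<le> C' * \<rho> ^ k" for k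
  proof (cases "k0 \<le> k")
    case True
    hence "norm (a k - L) \<le> C * \<rho> ^ k" using assms by auto
    also have "\<dots> \<le> C' * \<rho> ^ k" using assms(1) unfolding C'_def
      by (intro mult_right_mono) auto
    finally show ?thesis .
  next
    case False
    hence "norm (a k - L) / \<rho> ^ k \<le> M" unfolding M_def by (intro Max_ge) auto
    hence "norm (a k - L) \<le> M * \<rho> ^ k" using assms(1) by (simp add: divide_le_eq)
    also have "\<dots> \<le> C' * \<rho> ^ k" using assms(1) unfolding C'_def
      by (intro mult_right_mono) auto
    finally show ?thesis .
  qed
  thus ?thesis unfolding r_linear_conv_def using assms(1,2) by blast
qed


lemma tau_rule_nonneg:
  assumes "tau_rule G x S c0 C0 c1 c2 use_g k t" "0 \<le> c0" "0 < c1"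
  shows "0 \<le> t"
proof -
  define gn where "gn = norm (G (x (Suc k)))"
  define wl where "wl = min c0 (c1 * gn powr c2)"
  define wu where "wu = max C0 (ereal (inverse (c1 * gn powr c2)))"
  have wl: "0 \<le> wl" unfolding wl_def using assms by auto
  have "0 \<le> ereal (inverse (c1 * gn powr c2))" using assms by auto
  hence wu: "0 \<le> wu" unfolding wu_def by (rule order_trans) simp
  have "\<exists>r. Pproj wl wu r \<le> t" using assms(1) unfolding tau_rule_def Let_def gn_def wl_def wu_def
    by (simp split: if_splits; blast)
  then obtain r where "Pproj wl wu r \<le> t" by blast
  moreover have "0 \<le> Pproj wl wu r" by (rule Pproj_nonneg[OF wl wu])
  ultimately show ?thesis by linarith
qed

theorem theorem4p15:
  fixes J :: "'a::{real_inner,complete_space} \<Rightarrow> real"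
    and G :: "'a \<Rightarrow> 'a"
    and x0 :: 'a and l :: nat and c0 :: real and C0 :: ereal
    and cs c1 c2 :: real and use_g :: bool
    and S :: "nat \<Rightarrow> ('a \<Rightarrow>\<^sub>L 'a)" and \<tau> :: "nat \<Rightarrow> real"
    and Binv :: "nat \<Rightarrow> ('a \<Rightarrow>\<^sub>L 'a)" and \<alpha> :: "nat \<Rightarrow> real" and x :: "nat \<Rightarrow> 'a"
    and \<sigma> \<beta> \<eta> \<kappa> :: real and N :: "'a set" and xs :: 'a
  defines "\<Omega> \<equiv> {v. J v \<le> J x0}"
  defines "d \<equiv> (\<lambda>k. - Binv k (G (x k)))"
  defines "B \<equiv> Bop G x l cs S \<tau>"
  assumes run: "slbfgs_run J G x0 l c0 C0 cs c1 c2 use_g S \<tau> Binv \<alpha> x"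
    \<comment> \<open>1) J continuously differentiable with gradient G, bounded below\<close>
    and grad: "\<And>v. (J has_derivative (\<lambda>h. G v \<bullet> h)) (at v)"
    and grad_cont: "continuous_on UNIV G"
    and bdd: "bdd_below (range J)"
    \<comment> \<open>2) gradient Lipschitz on Omega\<close>
    and lip: "\<exists>L>0. \<forall>u\<in>\<Omega>. \<forall>v\<in>\<Omega>. norm (G u - G v) \<le> L * norm (u - v)"
    \<comment> \<open>3) bounded S_k\<close>
    and S_bdd: "bounded (range S)"
    \<comment> \<open>4) line search: Armijo backtracking throughout, or Wolfe-Powell throughout\<close>
    and sigma: "0 < \<sigma>" "\<sigma> < 1"
    and ls: "(0 < \<beta> \<and> \<beta> < 1 \<and> (\<forall>k. armijo_backtracking J G x d \<sigma> \<beta> \<alpha> k))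
           \<or> (\<sigma> < \<eta> \<and> \<eta> < 1 \<and> (\<forall>k. wolfe_powell J G x d \<sigma> \<eta> \<alpha> k))"
    \<comment> \<open>5) c0 = 0 only if the inverses of B_k^(0) are uniformly bounded\<close>
    and c0_zero: "c0 = 0 \<longrightarrow> (\<exists>M. \<forall>k. \<exists>A :: ('a \<Rightarrow>\<^sub>L 'a).
                      (\<forall>v. blinfun_apply A (B0 S \<tau> k v) = v \<and> B0 S \<tau> k (blinfun_apply A v) = v) \<and> norm A \<le> M)"
    \<comment> \<open>6) C0 = infinity only if tau^g variant, or C^2 with averaged Hessian condition\<close>
    and C0_inf: "C0 = \<infinity> \<longrightarrow> use_g \<or>
                   (\<exists>H :: 'a \<Rightarrow> ('a \<Rightarrow>\<^sub>L 'a).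
                      (\<forall>v. (G has_derivative blinfun_apply (H v)) (at v)) \<and> continuous_on UNIV H \<and>
                      (\<forall>k. sym_psd (integral {0..1} (\<lambda>t. H (x k + t *\<^sub>R step_s x k)) - S (Suc k))) \<and>
                      bounded (range (\<lambda>k. integral {0..1} (\<lambda>t. H (x k + t *\<^sub>R step_s x k)) - S (Suc k))))"
    \<comment> \<open>8) bounded B_k and B_k^{-1}\<close>
    and B_bdd: "bounded (range B)"
    and Binv_bdd: "bounded (range Binv)"
    \<comment> \<open>cluster point with local strong convexity on a convex neighbourhood\<close>
    and cluster: "\<exists>r. strict_mono r \<and> (x \<circ> r) \<longlonglongrightarrow> xs"
    and N_nhd: "xs \<in> interior N" and N_sub: "N \<subseteq> \<Omega>"
    and kappa: "\<kappa> > 0"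
    and sconv: "strongly_convex_on N J \<kappa>"
  shows "(\<forall>v\<in>N. J xs + \<kappa> * (norm (v - xs))\<^sup>2 \<le> J v)
       \<and> r_linear_conv x xs
       \<and> r_linear_conv (\<lambda>k. G (x k)) 0
       \<and> q_linear_conv (\<lambda>k. J (x k)) (J xs)
       \<and> (\<forall>kb. (\<forall>k\<ge>kb. x k \<in> N) \<longrightarrow>
            (\<forall>k\<ge>kb. J (x (Suc k)) - J xs
                      \<le> (1 - 2 * \<sigma> * \<alpha> k * \<kappa> / norm (B k)) * (J (x k) - J xs))
            \<and> (SUP k. 1 - 2 * \<sigma> * \<alpha> k * \<kappa> / norm (B k)) < 1)"
proof -
  have c0: "0 \<le> c0" and cs: "cs > 0" and c1: "c1 > 0" and x0: "x 0 = x0" and tau0: "\<tau> 0 > 0"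
    and Spsd: "\<And>k. sym_psd (S k)"
    and inv1: "\<And>k v. Binv k (B k v) = v" and inv2: "\<And>k v. B k (Binv k v) = v"
    and apos: "\<And>k. \<alpha> k > 0"
    and xstep: "\<And>k. x (Suc k) = x k + \<alpha> k *\<^sub>R d k"
    and gpos: "\<And>k. norm (G (x (Suc k))) > 0"
    and taur: "\<And>k. tau_rule G x S c0 C0 c1 c2 use_g k (\<tau> (Suc k))"
    using run unfolding slbfgs_run_def B_def d_def by auto
  have tau_nn: "\<tau> k \<ge> 0" for k
  proof (cases k)
    case 0 thus ?thesis using tau0 by simp
  next
    case (Suc j) thus ?thesis using tau_rule_nonneg[OF taur[of j] c0 c1] by simp
  qed
  have Bpsd: "sym_psd (B k)" for k
    unfolding B_def by (rule Bop_psd[OF Spsd tau_nn cs])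
  obtain Mb0 where Mb0: "\<And>k. norm (B k) \<le> Mb0"
    using B_bdd unfolding bounded_iff by auto
  define Mb where "Mb = max 1 Mb0"
  have Mb: "Mb > 0" "\<And>k. norm (B k) \<le> Mb" unfolding Mb_def using Mb0 by (auto intro: le_max_iff_disj[THEN iffD2])
  obtain Mi0 where Mi0: "\<And>k. norm (Binv k) \<le> Mi0"
    using Binv_bdd unfolding bounded_iff by auto
  define Mi where "Mi = max 1 Mi0"
  have Mi: "Mi > 0" "\<And>k. norm (Binv k) \<le> Mi" unfolding Mi_def using Mi0 by (auto intro: le_max_iff_disj[THEN iffD2])
  obtain L where L: "L > 0" and lipL: "\<forall>u\<in>\<Omega>. \<forall>v\<in>\<Omega>. norm (G u - G v) \<le> L * norm (u - v)"
    using lip by blast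
  have gnz: "G (x k) \<noteq> 0" for k
  proof (cases k)
    case (Suc j) thus ?thesis using gpos[of j] by auto
  next
    case 0
    show ?thesis
    proof
      assume h: "G (x k) = 0"
      have "d 0 = 0" unfolding d_def using h 0 by simp
      hence "x 1 = x 0" using xstep[of 0] by simp
      thus False using gpos[of 0] h 0 by simp
    qed
  qed
  have Bnz: "norm (B k) > 0" for k
  proof -
    have "B k \<noteq> 0" using inv2[of k "G (x k)"] gnz[of k] by auto
    thus ?thesis by simp
  qed
  define p where "p k = G (x k) \<bullet> Binv k (G (x k))" for k
  have gd: "G (x k) \<bullet> d k = - p k" for k unfolding d_def p_def by simp
  have pB: "(norm (G (x k)))\<^sup>2 \<le> norm (B k) * p k" for k
  proof -
    have "(norm (B k (Binv k (G (x k)))))\<^sup>2 \<le> norm (B k) * (B k (Binv k (G (x k))) \<bullet> Binv k (G (x k)))"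
      by (rule psd_normsq[OF Bpsd])
    thus ?thesis unfolding p_def inv2 .
  qed
  have ppos: "p k > 0" for k
  proof -
    have "0 < (norm (G (x k)))\<^sup>2" using gnz[of k] by simp
    also have "\<dots> \<le> norm (B k) * p k" by (rule pB)
    finally show ?thesis using Bnz[of k] by (simp add: zero_less_mult_iff)
  qed
  have dG: "norm (d k) \<le> Mi * norm (G (x k))" for k
  proof -
    have "norm (d k) = norm (Binv k (G (x k)))" unfolding d_def by simp
    also have "\<dots> \<le> norm (Binv k) * norm (G (x k))" by (rule norm_blinfun)
    also have "\<dots> \<le> Mi * norm (G (x k))" using Mi by (intro mult_right_mono) auto
    finally show ?thesis .
  qed
  have gMb: "(norm (G (x k)))\<^sup>2 \<le> Mb * p k" for k
    using order_trans[OF pB[of k] mult_right_mono[OF Mb(2)[of k] less_imp_le[OF ppos[of k]]]] .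
  have dp: "(norm (d k))\<^sup>2 \<le> Mi\<^sup>2 * Mb * p k" for k
  proof -
    have "(norm (d k))\<^sup>2 \<le> (Mi * norm (G (x k)))\<^sup>2" using dG[of k] by (intro power_mono) auto
    also have "\<dots> = Mi\<^sup>2 * (norm (G (x k)))\<^sup>2" by (simp add: power_mult_distrib)
    also have "\<dots> \<le> Mi\<^sup>2 * (Mb * p k)" using gMb[of k] by (intro mult_left_mono) auto
    finally show ?thesis by (simp add: mult.assoc)
  qed
  have gdp: "norm (G (x k)) * norm (d k) \<le> Mi * Mb * p k" for k
  proof -
    have "norm (G (x k)) * norm (d k) \<le> norm (G (x k)) * (Mi * norm (G (x k)))"
      using dG[of k] by (intro mult_left_mono) auto
    also have "\<dots> = Mi * (norm (G (x k)))\<^sup>2" by (simp add: power2_eq_square)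
    also have "\<dots> \<le> Mi * (Mb * p k)" using gMb[of k] Mi by (intro mult_left_mono) auto
    finally show ?thesis by (simp add: mult.assoc)
  qed
  have armk: "armijo J G x d \<sigma> k (\<alpha> k)" for k
    using ls unfolding armijo_backtracking_def wolfe_powell_def by (metis)
  have arm: "J (x (Suc k)) \<le> J (x k) - \<alpha> k * \<sigma> * p k" for k
    using armk[of k] unfolding armijo_def xstep gd by simp
  have Jdec: "J (x (Suc k)) \<le> J (x k)" for k
  proof -
    have "0 \<le> \<alpha> k * \<sigma> * p k" using apos[of k] sigma ppos[of k] by simp
    thus ?thesis using arm[of k] by linarith
  qed
  have inO: "x k \<in> \<Omega>" for k
  proof (induction k)
    case 0 thus ?case unfolding \<Omega>_def x0 by simp
  next
    case (Suc k) thus ?case using Jdec[of k] unfolding \<Omega>_def by simp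
  qed
  obtain amin where amin: "amin > 0" "\<And>k. amin \<le> \<alpha> k"
  proof -
    define c where "c = L * Mb * Mi\<^sup>2"
    have cpos: "c > 0" unfolding c_def using L Mb Mi by simp
    from ls show ?thesis
    proof
      assume h: "0 < \<beta> \<and> \<beta> < 1 \<and> (\<forall>k. armijo_backtracking J G x d \<sigma> \<beta> \<alpha> k)"
      define a0 where "a0 = min 1 (\<beta> * (1 - \<sigma>) / c)"
      have "a0 > 0" unfolding a0_def using h sigma cpos by simp
      moreover have "a0 \<le> \<alpha> k" for k
      proof -
        obtain i where i: "\<alpha> k = \<beta> ^ i" "\<forall>j<i. \<not> armijo J G x d \<sigma> k (\<beta> ^ j)"
          using h unfolding armijo_backtracking_def by blast
        show ?thesis
        proof (cases i)
          case 0 thus ?thesis using i unfolding a0_def by simp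
        next
          case (Suc j)
          have fail: "J (x k + \<beta> ^ j *\<^sub>R d k) > J (x k) + \<beta> ^ j * \<sigma> * (G (x k) \<bullet> d k)"
            using i(2) Suc unfolding armijo_def by auto
          have lipL': "\<forall>u\<in>{v. J v \<le> J x0}. \<forall>v\<in>{v. J v \<le> J x0}. norm (G u - G v) \<le> L * norm (u - v)"
            using lipL unfolding \<Omega>_def .
          have "J (x k) \<le> J x0" using inO[of k] unfolding \<Omega>_def by simp
          from armijo_fail_bound[OF grad lipL' L this _ sigma _ fail]
          have "(1 - \<sigma>) * (- (G (x k) \<bullet> d k)) \<le> L * \<beta> ^ j * (norm (d k))\<^sup>2"
            using gd[of k] ppos[of k] h by simp
          hence "(1 - \<sigma>) * p k \<le> L * \<beta> ^ j * (norm (d k))\<^sup>2" using gd[of k] by simp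
          also have "\<dots> \<le> L * \<beta> ^ j * (Mi\<^sup>2 * Mb * p k)"
            using dp[of k] L h by (intro mult_left_mono) auto
          also have "\<dots> = (\<beta> ^ j * c) * p k" unfolding c_def by (simp add: algebra_simps)
          finally have "1 - \<sigma> \<le> \<beta> ^ j * c" using ppos[of k] by (simp add: mult_le_cancel_right)
          hence "(1 - \<sigma>) / c \<le> \<beta> ^ j" using cpos by (simp add: divide_le_eq)
          hence "\<beta> * ((1 - \<sigma>) / c) \<le> \<beta> * \<beta> ^ j" using h by (intro mult_left_mono) auto
          hence "\<beta> * (1 - \<sigma>) / c \<le> \<alpha> k" using i Suc by simp
          thus ?thesis unfolding a0_def by simp
        qed
      qed
      ultimately show ?thesis using that by blast
    next
      assume h: "\<sigma> < \<eta> \<and> \<eta> < 1 \<and> (\<forall>k. wolfe_powell J G x d \<sigma> \<eta> \<alpha> k)"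
      define a0 where "a0 = (1 - \<eta>) / c"
      have "a0 > 0" unfolding a0_def using h cpos by simp
      moreover have "a0 \<le> \<alpha> k" for k
      proof -
        have w: "G (x (Suc k)) \<bullet> d k \<ge> \<eta> * (G (x k) \<bullet> d k)"
          using h unfolding wolfe_powell_def xstep by auto
        have "(1 - \<eta>) * p k \<le> (G (x (Suc k)) - G (x k)) \<bullet> d k"
          using w gd[of k] by (simp add: inner_diff_left algebra_simps)
        also have "\<dots> \<le> norm (G (x (Suc k)) - G (x k)) * norm (d k)" by (rule norm_cauchy_schwarz)
        also have "\<dots> \<le> L * norm (x (Suc k) - x k) * norm (d k)"
          using lipL inO by (intro mult_right_mono) auto
        also have "\<dots> = L * \<alpha> k * (norm (d k))\<^sup>2"
          using apos[of k] unfolding xstep by (simp add: power2_eq_square)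
        also have "\<dots> \<le> L * \<alpha> k * (Mi\<^sup>2 * Mb * p k)"
          using dp[of k] L apos[of k] by (intro mult_left_mono) auto
        also have "\<dots> = (\<alpha> k * c) * p k" unfolding c_def by (simp add: algebra_simps)
        finally have "1 - \<eta> \<le> \<alpha> k * c" using ppos[of k] by (simp add: mult_le_cancel_right)
        thus ?thesis unfolding a0_def using cpos by (simp add: divide_le_eq)
      qed
      ultimately show ?thesis using that by blast
    qed
  qed
  obtain r where r: "strict_mono r" "(x \<circ> r) \<longlonglongrightarrow> xs" using cluster by blast
  have Jcont: "isCont J v" for v using grad[of v] by (rule has_derivative_continuous)
  have Gcont: "isCont G v" for v
    using grad_cont continuous_on_eq_continuous_at open_UNIV by blast
  have Jr: "(\<lambda>j. J (x (r j))) \<longlonglongrightarrow> J xs"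
    using isCont_tendsto_compose[OF Jcont r(2)] by (simp add: o_def)
  have Gr: "(\<lambda>j. G (x (r j))) \<longlonglongrightarrow> G xs"
    using isCont_tendsto_compose[OF Gcont r(2)] by (simp add: o_def)
  have decJ: "decseq (\<lambda>k. J (x k))" using Jdec by (intro decseq_SucI) auto
  have Jlow: "J xs \<le> J (x k)" for k
  proof (rule LIMSEQ_le_const2[OF Jr])
    show "\<exists>N. \<forall>n\<ge>N. J (x (r n)) \<le> J (x k)"
    proof (intro exI allI impI)
      fix n assume "k \<le> n"
      hence "k \<le> r n" using seq_suble[OF r(1), of n] by simp
      thus "J (x (r n)) \<le> J (x k)" using decJ unfolding decseq_def by blast
    qed
  qed
  have Jconv: "(\<lambda>k. J (x k)) \<longlonglongrightarrow> J xs"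
  proof -
    obtain Lj where Lj: "(\<lambda>k. J (x k)) \<longlonglongrightarrow> Lj"
      using decseq_convergent[OF decJ, of "J xs"] Jlow by blast
    have "((\<lambda>k. J (x k)) \<circ> r) \<longlonglongrightarrow> Lj" by (rule LIMSEQ_subseq_LIMSEQ[OF Lj r(1)])
    hence "Lj = J xs" using Jr LIMSEQ_unique by (auto simp: o_def)
    thus ?thesis using Lj by simp
  qed
  have Jdiff: "(\<lambda>k. J (x k) - J (x (Suc k))) \<longlonglongrightarrow> 0"
  proof -
    have "(\<lambda>k. J (x (Suc k))) \<longlonglongrightarrow> J xs" using Jconv by (rule LIMSEQ_Suc)
    from tendsto_diff[OF Jconv this] show ?thesis by simp
  qed
  define cg where "cg = Mb / (amin * \<sigma>)"
  have cg: "cg > 0" unfolding cg_def using Mb amin sigma by simp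
  have gsq: "(norm (G (x k)))\<^sup>2 \<le> cg * (J (x k) - J (x (Suc k)))" for k
  proof -
    have "amin * \<sigma> * p k \<le> \<alpha> k * \<sigma> * p k"
      using amin(2)[of k] sigma ppos[of k] by (intro mult_right_mono) auto
    also have "\<dots> \<le> J (x k) - J (x (Suc k))" using arm[of k] by simp
    finally have "p k \<le> (J (x k) - J (x (Suc k))) / (amin * \<sigma>)"
      using amin sigma by (simp add: le_divide_eq mult.commute mult.left_commute)
    hence "Mb * p k \<le> Mb * ((J (x k) - J (x (Suc k))) / (amin * \<sigma>))"
      using Mb by (intro mult_left_mono) auto
    thus ?thesis using gMb[of k] unfolding cg_def by simp
  qed
  have gsq0: "(\<lambda>k. (norm (G (x k)))\<^sup>2) \<longlonglongrightarrow> 0"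
  proof (rule tendsto_sandwich[of "\<lambda>_. 0" _ _ "\<lambda>k. cg * (J (x k) - J (x (Suc k)))"])
    show "\<forall>\<^sub>F n in sequentially. 0 \<le> (norm (G (x n)))\<^sup>2" by simp
    show "\<forall>\<^sub>F n in sequentially. (norm (G (x n)))\<^sup>2 \<le> cg * (J (x n) - J (x (Suc n)))"
      using gsq by simp
    show "(\<lambda>_. 0) \<longlonglongrightarrow> (0::real)" by simp
    show "(\<lambda>k. cg * (J (x k) - J (x (Suc k)))) \<longlonglongrightarrow> 0"
      using tendsto_mult_right_zero[OF Jdiff, of cg] by simp
  qed
  have gn0: "(\<lambda>k. norm (G (x k))) \<longlonglongrightarrow> 0"
    using tendsto_real_sqrt[OF gsq0] by simp
  have G0: "(\<lambda>k. G (x k)) \<longlonglongrightarrow> 0" using gn0 by (simp add: tendsto_norm_zero_iff)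
  have Gxs: "G xs = 0"
  proof -
    have "((\<lambda>k. G (x k)) \<circ> r) \<longlonglongrightarrow> 0" by (rule LIMSEQ_subseq_LIMSEQ[OF G0 r(1)])
    thus ?thesis using Gr LIMSEQ_unique by (auto simp: o_def)
  qed
  have xsN: "xs \<in> N" using N_nhd interior_subset by blast
  have part1: "\<forall>v\<in>N. J xs + \<kappa> * (norm (v - xs))\<^sup>2 \<le> J v"
  proof
    fix v assume "v \<in> N"
    have "(J has_derivative (\<lambda>h. 0 \<bullet> h)) (at xs)" using grad[of xs] Gxs by simp
    from sc_grad[OF sconv xsN \<open>v \<in> N\<close> this] show "J xs + \<kappa> * (norm (v - xs))\<^sup>2 \<le> J v" by simp
  qed
  have PL: "4 * \<kappa> * (J v - J xs) \<le> (norm (G v))\<^sup>2" if "v \<in> N" for v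
  proof -
    have h: "J v + G v \<bullet> (xs - v) + \<kappa> * (norm (xs - v))\<^sup>2 \<le> J xs"
      by (rule sc_grad[OF sconv that xsN grad])
    define t where "t = norm (xs - v)"
    have "- (G v \<bullet> (xs - v)) = G v \<bullet> (v - xs)" by (simp add: inner_diff_right)
    also have "\<dots> \<le> norm (G v) * norm (v - xs)" by (rule norm_cauchy_schwarz)
    also have "\<dots> = norm (G v) * t" unfolding t_def by (simp add: norm_minus_commute)
    finally have "- (G v \<bullet> (xs - v)) \<le> norm (G v) * t" .
    hence c1: "J v - J xs \<le> norm (G v) * t - \<kappa> * t\<^sup>2" using h unfolding t_def by linarith
    have c2: "4 * \<kappa> * (norm (G v) * t - \<kappa> * t\<^sup>2) \<le> (norm (G v))\<^sup>2"
    proof -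
      have "0 \<le> (norm (G v) - 2 * \<kappa> * t)\<^sup>2" by simp
      thus ?thesis by (simp add: power2_eq_square algebra_simps)
    qed
    have "4 * \<kappa> * (J v - J xs) \<le> 4 * \<kappa> * (norm (G v) * t - \<kappa> * t\<^sup>2)"
      using c1 kappa by (intro mult_left_mono) auto
    thus ?thesis using c2 by linarith
  qed
  have distN: "\<kappa> * (norm (v - xs))\<^sup>2 \<le> J v - J xs" if "v \<in> N" for v
    using part1 that by auto
  have qk: "J (x (Suc k)) - J xs \<le> (1 - 2 * \<sigma> * \<alpha> k * \<kappa> / norm (B k)) * (J (x k) - J xs)"
    if "x k \<in> N" for k
  proof -
    define E where "E = J (x k) - J xs"
    have E0: "E \<ge> 0" unfolding E_def using Jlow[of k] by simp
    have "4 * \<kappa> * E \<le> norm (B k) * p k" using PL[OF that] pB[of k] unfolding E_def by linarith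
    hence "4 * \<kappa> * E / norm (B k) \<le> p k" using Bnz[of k] by (simp add: divide_le_eq mult.commute)
    hence "\<alpha> k * \<sigma> * (4 * \<kappa> * E / norm (B k)) \<le> \<alpha> k * \<sigma> * p k"
      using apos[of k] sigma by (intro mult_left_mono) auto
    moreover have "2 * \<sigma> * \<alpha> k * \<kappa> / norm (B k) * E \<le> \<alpha> k * \<sigma> * (4 * \<kappa> * E / norm (B k))"
    proof -
      have "0 \<le> 2 * \<sigma> * \<alpha> k * \<kappa> / norm (B k) * E"
        using apos[of k] sigma kappa E0 Bnz[of k] by simp
      moreover have "\<alpha> k * \<sigma> * (4 * \<kappa> * E / norm (B k)) = 2 * (2 * \<sigma> * \<alpha> k * \<kappa> / norm (B k) * E)"
        by (simp add: field_simps)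
      ultimately show ?thesis by linarith
    qed
    ultimately have "2 * \<sigma> * \<alpha> k * \<kappa> / norm (B k) * E \<le> \<alpha> k * \<sigma> * p k" by linarith
    thus ?thesis using arm[of k] unfolding E_def by (simp add: algebra_simps)
  qed
  define qm where "qm = 1 - 2 * \<sigma> * amin * \<kappa> / Mb"
  have qm1: "qm < 1" unfolding qm_def using sigma amin kappa Mb by simp
  have termle: "1 - 2 * \<sigma> * \<alpha> k * \<kappa> / norm (B k) \<le> qm" for k
  proof -
    have "amin / Mb \<le> \<alpha> k / norm (B k)"
      by (rule frac_le) (use apos[of k] amin(2)[of k] Bnz[of k] Mb(2)[of k] in auto)
    hence "2 * \<sigma> * \<kappa> * (amin / Mb) \<le> 2 * \<sigma> * \<kappa> * (\<alpha> k / norm (B k))"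
      using sigma kappa by (intro mult_left_mono) auto
    thus ?thesis unfolding qm_def by (simp add: algebra_simps)
  qed
  have SUPlt: "(SUP k. 1 - 2 * \<sigma> * \<alpha> k * \<kappa> / norm (B k)) < 1"
  proof -
    have "(SUP k. 1 - 2 * \<sigma> * \<alpha> k * \<kappa> / norm (B k)) \<le> qm"
      by (rule cSUP_least) (auto intro: termle)
    thus ?thesis using qm1 by simp
  qed
  have part5: "\<forall>kb. (\<forall>k\<ge>kb. x k \<in> N) \<longrightarrow>
            (\<forall>k\<ge>kb. J (x (Suc k)) - J xs
                      \<le> (1 - 2 * \<sigma> * \<alpha> k * \<kappa> / norm (B k)) * (J (x k) - J xs))
            \<and> (SUP k. 1 - 2 * \<sigma> * \<alpha> k * \<kappa> / norm (B k)) < 1"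
    using qk SUPlt by blast
  obtain e where e: "e > 0" "ball xs e \<subseteq> N" using N_nhd mem_interior by blast
  define Cs where "Cs = Mi * Mb / (4 * \<kappa> * \<sigma>)"
  have Cs: "Cs > 0" unfolding Cs_def using Mi Mb kappa sigma by simp
  have stepb: "norm (x (Suc k) - x k) \<le> Cs * norm (G (x k))" if "x k \<in> N" for k
  proof -
    have g0: "norm (G (x k)) > 0" using gnz[of k] by simp
    have "\<alpha> k * \<sigma> * p k \<le> J (x k) - J xs" using arm[of k] Jlow[of "Suc k"] by linarith
    also have "\<dots> \<le> (norm (G (x k)))\<^sup>2 / (4 * \<kappa>)"
      using PL[OF that] kappa by (simp add: le_divide_eq mult.commute)
    finally have a: "\<alpha> k * \<sigma> * p k \<le> (norm (G (x k)))\<^sup>2 / (4 * \<kappa>)" .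
    have "\<alpha> k * (norm (G (x k)) * norm (d k)) \<le> \<alpha> k * (Mi * Mb * p k)"
      using gdp[of k] apos[of k] by (intro mult_left_mono) auto
    also have "\<dots> = (Mi * Mb / \<sigma>) * (\<alpha> k * \<sigma> * p k)" using sigma by (simp add: field_simps)
    also have "\<dots> \<le> (Mi * Mb / \<sigma>) * ((norm (G (x k)))\<^sup>2 / (4 * \<kappa>))"
      using a Mi Mb sigma by (intro mult_left_mono) auto
    also have "\<dots> = (Cs * norm (G (x k))) * norm (G (x k))"
      unfolding Cs_def using sigma kappa by (simp add: field_simps power2_eq_square)
    finally have "(\<alpha> k * norm (d k)) * norm (G (x k)) \<le> (Cs * norm (G (x k))) * norm (G (x k))"
      by (simp add: algebra_simps)
    hence "\<alpha> k * norm (d k) \<le> Cs * norm (G (x k))" using g0 by (simp add: mult_le_cancel_right)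
    thus ?thesis using apos[of k] unfolding xstep by simp
  qed
  have ev1: "eventually (\<lambda>k. J (x k) - J xs < \<kappa> * (e/2)\<^sup>2) sequentially"
  proof -
    have "(\<lambda>k. J (x k) - J xs) \<longlonglongrightarrow> 0" using Jconv by (simp add: LIM_zero)
    moreover have "\<kappa> * (e/2)\<^sup>2 > 0" using kappa e by simp
    ultimately show ?thesis using order_tendstoD(2) by blast
  qed
  have ev2: "eventually (\<lambda>k. Cs * norm (G (x k)) < e/2) sequentially"
  proof -
    have "(\<lambda>k. Cs * norm (G (x k))) \<longlonglongrightarrow> 0" using tendsto_mult_right_zero[OF gn0, of Cs] by simp
    moreover have "e/2 > 0" using e by simp
    ultimately show ?thesis using order_tendstoD(2) by blast
  qed
  obtain K where K: "\<And>k. k \<ge> K \<Longrightarrow> J (x k) - J xs < \<kappa> * (e/2)\<^sup>2 \<and> Cs * norm (G (x k)) < e/2"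
    using eventually_conj[OF ev1 ev2] unfolding eventually_sequentially by blast
  obtain j0 where j0: "\<And>j. j \<ge> j0 \<Longrightarrow> dist (x (r j)) xs < e"
    using r(2) e(1) unfolding LIMSEQ_def by (auto simp: o_def)
  define k0 where "k0 = r (max j0 K)"
  have k0K: "K \<le> k0" unfolding k0_def using seq_suble[OF r(1), of "max j0 K"] by simp
  have xk0: "x k0 \<in> N" unfolding k0_def using j0[of "max j0 K"] e(2) by (auto simp: dist_commute)
  have inN: "x k \<in> N" if "k0 \<le> k" for k
    using that
  proof (induction k rule: dec_induct)
    case base thus ?case by (rule xk0)
  next
    case (step n)
    have Kn: "K \<le> n" using k0K step by simp
    have "\<kappa> * (norm (x n - xs))\<^sup>2 < \<kappa> * (e/2)\<^sup>2" using distN[OF step.IH] K[OF Kn] by linarith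
    hence "(norm (x n - xs))\<^sup>2 < (e/2)\<^sup>2" using kappa by simp
    hence a: "norm (x n - xs) < e/2" using power_less_imp_less_base[of "norm (x n - xs)" 2 "e/2"] e(1) by simp
    have b: "norm (x (Suc n) - x n) < e/2" using stepb[OF step.IH] K[OF Kn] by linarith
    have "norm (x (Suc n) - xs) \<le> norm (x (Suc n) - x n) + norm (x n - xs)"
      using norm_triangle_ineq[of "x (Suc n) - x n" "x n - xs"] by simp
    hence "dist (x (Suc n)) xs < e" using a b by (simp add: dist_norm)
    thus ?case using e(2) by (auto simp: dist_commute)
  qed
  define q where "q = max 0 qm"
  have q: "0 \<le> q" "q < 1" unfolding q_def using qm1 by auto
  have Eq: "J (x (Suc k)) - J xs \<le> q * (J (x k) - J xs)" if "k0 \<le> k" for k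
  proof -
    have "J (x (Suc k)) - J xs \<le> (1 - 2 * \<sigma> * \<alpha> k * \<kappa> / norm (B k)) * (J (x k) - J xs)"
      by (rule qk[OF inN[OF that]])
    also have "\<dots> \<le> q * (J (x k) - J xs)"
      using termle[of k] Jlow[of k] unfolding q_def by (intro mult_right_mono) auto
    finally show ?thesis .
  qed
  have part4: "q_linear_conv (\<lambda>k. J (x k)) (J xs)"
    unfolding q_linear_conv_def
  proof (intro exI[of _ q] exI[of _ k0] conjI q allI impI)
    fix k assume "k0 \<le> k"
    thus "\<bar>J (x (Suc k)) - J xs\<bar> \<le> q * \<bar>J (x k) - J xs\<bar>"
      using Eq[of k] Jlow[of k] Jlow[of "Suc k"] by simp
  qed
  define E0 where "E0 = J (x k0) - J xs"
  have geo: "J (x k) - J xs \<le> q ^ (k - k0) * E0" if "k0 \<le> k" for k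
    using that
  proof (induction k rule: dec_induct)
    case base thus ?case unfolding E0_def by simp
  next
    case (step n)
    have "J (x (Suc n)) - J xs \<le> q * (J (x n) - J xs)" by (rule Eq[OF step.hyps(1)])
    also have "\<dots> \<le> q * (q ^ (n - k0) * E0)" using step.IH q by (intro mult_left_mono) auto
    also have "\<dots> = q ^ (Suc n - k0) * E0" using step.hyps(1) by (simp add: Suc_diff_le)
    finally show ?case .
  qed
  define q1 where "q1 = max q (1/2)"
  have q1: "0 < q1" "q1 < 1" "q \<le> q1" unfolding q1_def using q by auto
  define \<rho> where "\<rho> = sqrt q1"
  have rho: "0 < \<rho>" "\<rho> < 1" unfolding \<rho>_def using q1 by auto
  have E0nn: "E0 \<ge> 0" unfolding E0_def using Jlow[of k0] by simp
  define Cx where "Cx = sqrt (E0 / \<kappa>) / \<rho> ^ k0"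
  have xrate: "norm (x k - xs) \<le> Cx * \<rho> ^ k" if "k0 \<le> k" for k
  proof -
    have "\<kappa> * (norm (x k - xs))\<^sup>2 \<le> q ^ (k - k0) * E0"
      using distN[OF inN[OF that]] geo[OF that] by linarith
    also have "\<dots> \<le> q1 ^ (k - k0) * E0" using q q1 E0nn by (intro mult_right_mono power_mono) auto
    finally have "(norm (x k - xs))\<^sup>2 \<le> (E0 / \<kappa>) * q1 ^ (k - k0)"
      using kappa by (simp add: le_divide_eq mult.commute mult.left_commute)
    hence "sqrt ((norm (x k - xs))\<^sup>2) \<le> sqrt ((E0 / \<kappa>) * q1 ^ (k - k0))"
      by (rule real_sqrt_le_mono)
    moreover have "sqrt ((E0 / \<kappa>) * q1 ^ (k - k0)) = sqrt (E0 / \<kappa>) * \<rho> ^ (k - k0)"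
      unfolding \<rho>_def by (simp only: real_sqrt_mult real_sqrt_power)
    ultimately have "norm (x k - xs) \<le> sqrt (E0 / \<kappa>) * \<rho> ^ (k - k0)" by simp
    also have "\<dots> = Cx * \<rho> ^ k"
    proof -
      have "\<rho> ^ k = \<rho> ^ (k - k0) * \<rho> ^ k0" using that by (simp add: power_add[symmetric])
      thus ?thesis unfolding Cx_def using rho by simp
    qed
    finally show ?thesis .
  qed
  have part2: "r_linear_conv x xs" by (rule r_lin_tail[OF rho]) (use xrate in blast)
  have part3: "r_linear_conv (\<lambda>k. G (x k)) 0"
  proof (rule r_lin_tail[OF rho, of k0 _ _ "L * Cx"], intro allI impI)
    fix k assume "k0 \<le> k"
    have xsO: "xs \<in> \<Omega>" using xsN N_sub by blast
    have "norm (G (x k) - 0) = norm (G (x k) - G xs)" using Gxs by simp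
    also have "\<dots> \<le> L * norm (x k - xs)" using lipL inO[of k] xsO by blast
    also have "\<dots> \<le> L * (Cx * \<rho> ^ k)" using xrate[OF \<open>k0 \<le> k\<close>] L by (intro mult_left_mono) auto
    finally show "norm (G (x k) - 0) \<le> L * Cx * \<rho> ^ k" by (simp add: mult.assoc)
  qed
  show ?thesis using part1 part2 part3 part4 part5 by blast
qed

end
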